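(* Let $S\subseteq\mathbb{N}^{\mathbb{N}}$. Then $S$ is $0$th-order guessable if and only if $S\in\mathbf{\Delta}^0_2$; and for every integer $m>0$, $S$ is $m$th-order guessable if and only if $S\in\mathbf{\Delta}^0_{m+1}$.
   Context: Baire space $\mathbb{N}^{\mathbb{N}}$ carries the product of discrete topologies; $\mathbf{\Sigma}^0_n,\mathbf{\Pi}^0_n,\mathbf{\Delta}^0_n$ are the boldface Borel pointclasses. $\mathbb{N}^{<\mathbb{N}}$ is the set of finite sequences of naturals. The language $\mathscr{L}_{\max}$ is the first-order language (with equality) having: a constant symbol $\overline{n}$ for each $n\in\mathbb{N}$; an $n$-ary function symbol $\tilde w$ for each $w:\mathbb{N}^n\to\mathbb{N}$; an $n$-ary predicate symbol $\tilde p$ for each $p\subseteq\mathbb{N}^n$; a special unary function symbol $\mathbf{f}$; and, for every $n$ and every $G:\mathbb{N}^n\times\mathbb{N}^{<\mathbb{N}}\to\mathbb{N}$, an $(n+1)$-ary function symbol $G\circ\mathbf{f}$. For $f\in\mathbb{N}^{\mathbb{N}}$, $\mathscr{M}_f$ is the structure with universe $\mathbb{N}$ interpreting $\overline n$ as $n$, $\tilde w$ as $w$, $\tilde p$ as $p$, $\mathbf f$ as $f$, and $G\circ\mathbf f$ as $(m_1,\dots,m_n,m)\mapsto G(m_1,\dots,m_n,f(0),\dots,f(m))$. For a sentence $\phi$, $f(\phi)=1$ if $\mathscr{M}_f\models\phi$ and $f(\phi)=0$ otherwise. Formula classes: "quantifier-free" means containing no quantifiers at all (not even bounded ones). $\Sigma_0=\Pi_0=\Delta_0$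 is the set of quantifier-free formulas; $\Sigma_{n+1}=\{\exists x\,\phi:\phi\in\Pi_n\}$ and $\Pi_{n+1}=\{\forall x\,\phi:\phi\in\Sigma_n\}$; a formula is $\Delta_{n+1}$ if it is equivalent, in every structure $\mathscr{M}_f$ ($f\in\mathbb{N}^{\mathbb{N}}$), to some $\Sigma_{n+1}$ formula of $\mathscr{L}_{\max}$ and also to some $\Pi_{n+1}$ formula of $\mathscr{L}_{\max}$. For a set $\Sigma$ of symbols of $\mathscr{L}_{\max}$, a sentence "of $\mathscr{L}_{\max}\cap\Sigma$" is an $\mathscr{L}_{\max}$-sentence all of whose non-logical symbols lie in $\Sigma$. Definition ($m$th-order guessable): $S\subseteq\mathbb{N}^{\mathbb{N}}$ is $m$th-order guessable if there exist a countable set $\Sigma$ of $\mathscr{L}_{\max}$-symbols, a listing $\phi_0,\phi_1,\dots$ of all $\Delta_m$ sentences of $\mathscr{L}_{\max}\cap\Sigma$, and a function $G:\{0,1\}^{<\mathbb{N}}\to\mathbb{N}$ such that for every $f:\mathbb{N}\to\mathbb{N}$, $\lim_{n\to\infty}G(f(\phi_0),\dots,f(\phi_n))$ equals $1$ if $f\in S$ and $0$ if $f\notin S$. *)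

theory Defs
  imports "HOL-Analysis.Analysis"
begin

text \<open>Baire space is nat \<Rightarrow> nat with the product topology (Function_Topology) of
  the discrete (order) topology on nat. Indices n \<ge> 1; level 0 is unused.\<close>

fun bSigma :: "nat \<Rightarrow> (nat \<Rightarrow> nat) set set" where
  "bSigma 0 = {}"
| "bSigma (Suc 0) = {A. open A}"
| "bSigma (Suc (Suc n)) =
     {\<Union>i::nat. A i | A. \<forall>i. A i \<in> uminus ` bSigma (Suc n)}"

definition bPi :: "nat \<Rightarrow> (nat \<Rightarrow> nat) set set" where
  "bPi n = uminus ` bSigma n"

definition bDelta :: "nat \<Rightarrow> (nat \<Rightarrow> nat) set set" where
  "bDelta n = bSigma n \<inter> bPi n"

text \<open>An n-ary function symbol for w : N^n \<rightarrow> N is SFun n w, where w acts on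
  argument lists (only its values on lists of length n matter); similarly for
  predicates (p \<subseteq> N^n as a set of lists of length n) and for G \<circ> f.\<close>

datatype sym =
    SConst nat
  | SFun nat "nat list \<Rightarrow> nat"
  | SPred nat "nat list set"
  | SF
  | SGF nat "nat list \<Rightarrow> nat list \<Rightarrow> nat"

datatype trm =
    Var nat
  | Cst nat
  | App nat "nat list \<Rightarrow> nat" "trm list"
  | Fap trm
  | GFap nat "nat list \<Rightarrow> nat list \<Rightarrow> nat" "trm list" trm

datatype fm =
    Eq trm trm
  | Pred nat "nat list set" "trm list"
  | Neg fm
  | Conj fm fm
  | Disj fm fm
  | Imp fm fm
  | Ex nat fm
  | All nat fm

fun teval :: "(nat \<Rightarrow> nat) \<Rightarrow> (nat \<Rightarrow> nat) \<Rightarrow> trm \<Rightarrow> nat" where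
  "teval f e (Var x) = e x"
| "teval f e (Cst n) = n"
| "teval f e (App k w ts) = w (map (teval f e) ts)"
| "teval f e (Fap t) = f (teval f e t)"
| "teval f e (GFap k G ts t) = G (map (teval f e) ts) (map f [0..<Suc (teval f e t)])"

fun holds :: "(nat \<Rightarrow> nat) \<Rightarrow> (nat \<Rightarrow> nat) \<Rightarrow> fm \<Rightarrow> bool" where
  "holds f e (Eq s t) = (teval f e s = teval f e t)"
| "holds f e (Pred k p ts) = (map (teval f e) ts \<in> p)"
| "holds f e (Neg \<phi>) = (\<not> holds f e \<phi>)"
| "holds f e (Conj \<phi> \<psi>) = (holds f e \<phi> \<and> holds f e \<psi>)"
| "holds f e (Disj \<phi> \<psi>) = (holds f e \<phi> \<or> holds f e \<psi>)"
| "holds f e (Imp \<phi> \<psi>) = (holds f e \<phi> \<longrightarrow> holds f e \<psi>)"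
| "holds f e (Ex x \<phi>) = (\<exists>n. holds f (e(x := n)) \<phi>)"
| "holds f e (All x \<phi>) = (\<forall>n. holds f (e(x := n)) \<phi>)"

fun wf_trm :: "trm \<Rightarrow> bool" where
  "wf_trm (Var x) = True"
| "wf_trm (Cst n) = True"
| "wf_trm (App k w ts) = (length ts = k \<and> (\<forall>t\<in>set ts. wf_trm t))"
| "wf_trm (Fap t) = wf_trm t"
| "wf_trm (GFap k G ts t) = (length ts = k \<and> (\<forall>s\<in>set ts. wf_trm s) \<and> wf_trm t)"

fun wf_fm :: "fm \<Rightarrow> bool" where
  "wf_fm (Eq s t) = (wf_trm s \<and> wf_trm t)"
| "wf_fm (Pred k p ts) = (length ts = k \<and> (\<forall>t\<in>set ts. wf_trm t))"
| "wf_fm (Neg \<phi>) = wf_fm \<phi>"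
| "wf_fm (Conj \<phi> \<psi>) = (wf_fm \<phi> \<and> wf_fm \<psi>)"
| "wf_fm (Disj \<phi> \<psi>) = (wf_fm \<phi> \<and> wf_fm \<psi>)"
| "wf_fm (Imp \<phi> \<psi>) = (wf_fm \<phi> \<and> wf_fm \<psi>)"
| "wf_fm (Ex x \<phi>) = wf_fm \<phi>"
| "wf_fm (All x \<phi>) = wf_fm \<phi>"

fun fv_trm :: "trm \<Rightarrow> nat set" where
  "fv_trm (Var x) = {x}"
| "fv_trm (Cst n) = {}"
| "fv_trm (App k w ts) = (\<Union>t\<in>set ts. fv_trm t)"
| "fv_trm (Fap t) = fv_trm t"
| "fv_trm (GFap k G ts t) = (\<Union>s\<in>set ts. fv_trm s) \<union> fv_trm t"

fun fv_fm :: "fm \<Rightarrow> nat set" where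
  "fv_fm (Eq s t) = fv_trm s \<union> fv_trm t"
| "fv_fm (Pred k p ts) = (\<Union>t\<in>set ts. fv_trm t)"
| "fv_fm (Neg \<phi>) = fv_fm \<phi>"
| "fv_fm (Conj \<phi> \<psi>) = fv_fm \<phi> \<union> fv_fm \<psi>"
| "fv_fm (Disj \<phi> \<psi>) = fv_fm \<phi> \<union> fv_fm \<psi>"
| "fv_fm (Imp \<phi> \<psi>) = fv_fm \<phi> \<union> fv_fm \<psi>"
| "fv_fm (Ex x \<phi>) = fv_fm \<phi> - {x}"
| "fv_fm (All x \<phi>) = fv_fm \<phi> - {x}"

fun syms_trm :: "trm \<Rightarrow> sym set" where
  "syms_trm (Var x) = {}"
| "syms_trm (Cst n) = {SConst n}"
| "syms_trm (App k w ts) = insert (SFun k w) (\<Union>t\<in>set ts. syms_trm t)"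
| "syms_trm (Fap t) = insert SF (syms_trm t)"
| "syms_trm (GFap k G ts t) = insert (SGF k G) ((\<Union>s\<in>set ts. syms_trm s) \<union> syms_trm t)"

fun syms_fm :: "fm \<Rightarrow> sym set" where
  "syms_fm (Eq s t) = syms_trm s \<union> syms_trm t"
| "syms_fm (Pred k p ts) = insert (SPred k p) (\<Union>t\<in>set ts. syms_trm t)"
| "syms_fm (Neg \<phi>) = syms_fm \<phi>"
| "syms_fm (Conj \<phi> \<psi>) = syms_fm \<phi> \<union> syms_fm \<psi>"
| "syms_fm (Disj \<phi> \<psi>) = syms_fm \<phi> \<union> syms_fm \<psi>"
| "syms_fm (Imp \<phi> \<psi>) = syms_fm \<phi> \<union> syms_fm \<psi>"
| "syms_fm (Ex x \<phi>) = syms_fm \<phi>"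
| "syms_fm (All x \<phi>) = syms_fm \<phi>"

definition sentence :: "fm \<Rightarrow> bool" where
  "sentence \<phi> \<longleftrightarrow> wf_fm \<phi> \<and> fv_fm \<phi> = {}"

fun qfree :: "fm \<Rightarrow> bool" where
  "qfree (Eq s t) = True"
| "qfree (Pred k p ts) = True"
| "qfree (Neg \<phi>) = qfree \<phi>"
| "qfree (Conj \<phi> \<psi>) = (qfree \<phi> \<and> qfree \<psi>)"
| "qfree (Disj \<phi> \<psi>) = (qfree \<phi> \<and> qfree \<psi>)"
| "qfree (Imp \<phi> \<psi>) = (qfree \<phi> \<and> qfree \<psi>)"
| "qfree (Ex x \<phi>) = False"
| "qfree (All x \<phi>) = False"

fun SigmaF :: "nat \<Rightarrow> fm \<Rightarrow> bool" and PiF :: "nat \<Rightarrow> fm \<Rightarrow> bool" where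
  "SigmaF 0 \<phi> = qfree \<phi>"
| "PiF 0 \<phi> = qfree \<phi>"
| "SigmaF (Suc n) \<phi> = (\<exists>x \<psi>. \<phi> = Ex x \<psi> \<and> PiF n \<psi>)"
| "PiF (Suc n) \<phi> = (\<exists>x \<psi>. \<phi> = All x \<psi> \<and> SigmaF n \<psi>)"

definition fm_equiv :: "fm \<Rightarrow> fm \<Rightarrow> bool" where
  "fm_equiv \<phi> \<psi> \<longleftrightarrow> (\<forall>f e. holds f e \<phi> = holds f e \<psi>)"

fun DeltaF :: "nat \<Rightarrow> fm \<Rightarrow> bool" where
  "DeltaF 0 \<phi> = qfree \<phi>"
| "DeltaF (Suc n) \<phi> =
     ((\<exists>\<psi>. wf_fm \<psi> \<and> SigmaF (Suc n) \<psi> \<and> fm_equiv \<phi> \<psi>) \<and>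
      (\<exists>\<theta>. wf_fm \<theta> \<and> PiF (Suc n) \<theta> \<and> fm_equiv \<phi> \<theta>))"

text \<open>f(phi) for a sentence phi (the assignment is irrelevant for sentences).\<close>
definition fval :: "(nat \<Rightarrow> nat) \<Rightarrow> fm \<Rightarrow> nat" where
  "fval f \<phi> = (if holds f (\<lambda>_. 0) \<phi> then 1 else 0)"

definition guessable :: "nat \<Rightarrow> (nat \<Rightarrow> nat) set \<Rightarrow> bool" where
  "guessable m S \<longleftrightarrow>
     (\<exists>(\<Sigma> :: sym set) (phi :: nat \<Rightarrow> fm) (G :: nat list \<Rightarrow> nat).
        countable \<Sigma> \<and>
        range phi = {\<phi>. sentence \<phi> \<and> DeltaF m \<phi> \<and> syms_fm \<phi> \<subseteq> \<Sigma>} \<and>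
        (\<forall>f :: nat \<Rightarrow> nat.
           (\<lambda>n. G (map (\<lambda>i. fval f (phi i)) [0..<Suc n]))
             \<longlonglongrightarrow> (if f \<in> S then 1 else 0)))"

end

theory Submission
  imports Defs "HOL-Library.Countable"
begin


lemma open_baire: "open (U::(nat\<Rightarrow>nat) set) \<longleftrightarrow> (\<forall>f\<in>U. \<exists>k. \<forall>g. (\<forall>j<k. g j = f j) \<longrightarrow> g \<in> U)"
proof
  assume "open U"
  hence o: "openin (product_topology (\<lambda>i. euclidean) UNIV) U" by (simp add: open_fun_def)
  show "\<forall>f\<in>U. \<exists>k. \<forall>g. (\<forall>j<k. g j = f j) \<longrightarrow> g \<in> U"
  proof
    fix f assume "f \<in> U"
    then obtain V where fin: "finite {i. V i \<noteq> (UNIV::nat set)}" and fV: "f \<in> Pi\<^sub>E UNIV V" and sub: "Pi\<^sub>E UNIV V \<subseteq> U"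
      using o unfolding openin_product_topology_alt by auto
    obtain k where k: "{i. V i \<noteq> UNIV} \<subseteq> {..<k}" using finite_nat_bounded[OF fin] by blast
    show "\<exists>k. \<forall>g. (\<forall>j<k. g j = f j) \<longrightarrow> g \<in> U"
    proof (intro exI allI impI)
      fix g assume a: "\<forall>j<k. g j = f j"
      have "g \<in> Pi\<^sub>E UNIV V"
      proof -
        have "g i \<in> V i" for i
        proof (cases "V i = UNIV")
          case False then have "i < k" using k by auto
          then show ?thesis using a fV by (auto simp: PiE_iff)
        qed auto
        then show ?thesis by (auto simp: PiE_iff)
      qed
      then show "g \<in> U" using sub by auto
    qed
  qed
next
  assume H: "\<forall>f\<in>U. \<exists>k. \<forall>g. (\<forall>j<k. g j = f j) \<longrightarrow> g \<in> U"
  show "open U" unfolding open_fun_def openin_product_topology_alt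
  proof
    fix f assume "f \<in> U"
    then obtain k where k: "\<forall>g. (\<forall>j<k. g j = f j) \<longrightarrow> g \<in> U" using H by blast
    define V where "V i = (if i < k then {f i} else (UNIV::nat set))" for i
    have "{i \<in> UNIV. V i \<noteq> topspace euclidean} \<subseteq> {..<k}" by (auto simp: V_def)
    hence "finite {i \<in> UNIV. V i \<noteq> topspace euclidean}" by (rule finite_subset) auto
    moreover have "\<forall>i\<in>UNIV. openin euclidean (V i)" by (simp add: open_discrete)
    moreover have "f \<in> Pi\<^sub>E UNIV V" by (auto simp: V_def PiE_iff)
    moreover have "Pi\<^sub>E UNIV V \<subseteq> U"
    proof
      fix x assume "x \<in> Pi\<^sub>E UNIV V"
      have "\<forall>j<k. x j = f j"
      proof (intro allI impI)
        fix j assume "j < k"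
        from \<open>x \<in> Pi\<^sub>E UNIV V\<close> have "x j \<in> V j" by (auto simp: PiE_iff)
        then show "x j = f j" using \<open>j < k\<close> by (simp add: V_def)
      qed
      thus "x \<in> U" using k by blast
    qed
    ultimately show "\<exists>V. finite {i \<in> UNIV. V i \<noteq> topspace euclidean} \<and> (\<forall>i\<in>UNIV. openin euclidean (V i)) \<and> f \<in> Pi\<^sub>E UNIV V \<and> Pi\<^sub>E UNIV V \<subseteq> U"
      by blast
  qed
qed

definition agr :: "nat \<Rightarrow> (nat \<Rightarrow> nat) \<Rightarrow> (nat \<Rightarrow> nat) \<Rightarrow> bool" where
  "agr k g f \<longleftrightarrow> (\<forall>j<k. g j = f j)"

lemma agr_mono: "agr k g f \<Longrightarrow> k' \<le> k \<Longrightarrow> agr k' g f"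
  by (auto simp: agr_def)

lemma list_bound:
  assumes "\<forall>s\<in>set ts. \<exists>k::nat. Q k s" and "\<And>k k' s. Q k s \<Longrightarrow> k \<le> k' \<Longrightarrow> Q k' s"
  shows "\<exists>k. \<forall>s\<in>set ts. Q k s"
  using assms(1)
proof (induction ts)
  case Nil then show ?case by simp
next
  case (Cons a ts)
  then obtain k1 where k1: "\<forall>s\<in>set ts. Q k1 s" by auto
  from Cons obtain k2 where k2: "Q k2 a" by auto
  have "Q (max k1 k2) a" by (rule assms(2)[OF k2]) simp
  moreover have "\<forall>s\<in>set ts. Q (max k1 k2) s" using k1 assms(2) by (meson max.cobounded1)
  ultimately have "\<forall>s\<in>set (a#ts). Q (max k1 k2) s" by simp
  then show ?case by blast
qed

lemma teval_ld: "\<exists>k. \<forall>g. agr k g f \<longrightarrow> teval g e t = teval f e t"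
proof (induction t)
  case (Var x) then show ?case by auto
next
  case (Cst n) then show ?case by auto
next
  case (App k w ts)
  have "\<exists>k. \<forall>s\<in>set ts. \<forall>g. agr k g f \<longrightarrow> teval g e s = teval f e s"
    by (rule list_bound) (use App agr_mono in blast)+
  then obtain k where "\<forall>s\<in>set ts. \<forall>g. agr k g f \<longrightarrow> teval g e s = teval f e s" by blast
  then have "\<forall>g. agr k g f \<longrightarrow> teval g e (App k' w ts) = teval f e (App k' w ts)" for k'
    by (auto intro!: arg_cong[where f=w] map_cong)
  then show ?case by blast
next
  case (Fap t)
  then obtain k where k: "\<forall>g. agr k g f \<longrightarrow> teval g e t = teval f e t" by blast
  have "\<forall>g. agr (max k (Suc (teval f e t))) g f \<longrightarrow> teval g e (Fap t) = teval f e (Fap t)"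
  proof (intro allI impI)
    fix g assume a: "agr (max k (Suc (teval f e t))) g f"
    then have 1: "agr k g f" by (rule agr_mono) simp
    have 2: "agr (Suc (teval f e t)) g f" using a by (rule agr_mono) simp
    have "teval g e t = teval f e t" using k 1 by blast
    then show "teval g e (Fap t) = teval f e (Fap t)" using 2 by (simp add: agr_def)
  qed
  then show ?case by blast
next
  case (GFap k G ts t)
  have "\<exists>k. \<forall>s\<in>set ts. \<forall>g. agr k g f \<longrightarrow> teval g e s = teval f e s"
    by (rule list_bound) (use GFap agr_mono in blast)+
  then obtain k1 where k1: "\<forall>s\<in>set ts. \<forall>g. agr k1 g f \<longrightarrow> teval g e s = teval f e s" by blast
  from GFap obtain k2 where k2: "\<forall>g. agr k2 g f \<longrightarrow> teval g e t = teval f e t" by blast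
  define K where "K = max k1 (max k2 (Suc (teval f e t)))"
  have "teval g e (GFap k G ts t) = teval f e (GFap k G ts t)" if a: "agr K g f" for g
  proof -
    have "agr k1 g f" "agr k2 g f" "agr (Suc (teval f e t)) g f" using a agr_mono unfolding K_def by fastforce+
    note ag = this
    from k1 ag(1) have "\<forall>s\<in>set ts. teval g e s = teval f e s" by blast
    then have 1: "map (teval g e) ts = map (teval f e) ts" by (simp only: map_eq_conv)
    from k2 ag(2) have 2: "teval g e t = teval f e t" by blast
    have 3: "map g [0..<Suc (teval f e t)] = map f [0..<Suc (teval f e t)]"
      using ag(3) unfolding agr_def by (intro map_cong) auto
    show ?thesis by (simp only: teval.simps 1 2 3)
  qed
  then show ?case by blast
qed

lemma qfree_ld: "qfree \<phi> \<Longrightarrow> \<exists>k. \<forall>g. agr k g f \<longrightarrow> holds g e \<phi> = holds f e \<phi>"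
proof (induction \<phi>)
  case (Eq s t)
  obtain k1 where k1: "\<forall>g. agr k1 g f \<longrightarrow> teval g e s = teval f e s" using teval_ld by blast
  obtain k2 where k2: "\<forall>g. agr k2 g f \<longrightarrow> teval g e t = teval f e t" using teval_ld by blast
  show ?case using k1 k2 agr_mono by (metis holds.simps(1) max.cobounded1 max.cobounded2)
next
  case (Pred k p ts)
  have "\<exists>k. \<forall>s\<in>set ts. \<forall>g. agr k g f \<longrightarrow> teval g e s = teval f e s"
    by (rule list_bound) (use teval_ld agr_mono in blast)+
  then obtain k where "\<forall>s\<in>set ts. \<forall>g. agr k g f \<longrightarrow> teval g e s = teval f e s" by blast
  then have "\<forall>g. agr k g f \<longrightarrow> holds g e (Pred k' p ts) = holds f e (Pred k' p ts)" for k'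
  proof (intro allI impI)
    fix g assume "\<forall>s\<in>set ts. \<forall>g. agr k g f \<longrightarrow> teval g e s = teval f e s" "agr k g f"
    then have "map (teval g e) ts = map (teval f e) ts" by (simp add: map_eq_conv)
    then show "holds g e (Pred k' p ts) = holds f e (Pred k' p ts)" by (simp only: holds.simps)
  qed
  then show ?case by blast
next
  case (Neg \<phi>) then show ?case by simp
next
  case (Conj \<phi> \<psi>) then show ?case by simp (metis agr_mono max.cobounded1 max.cobounded2)
next
  case (Disj \<phi> \<psi>) then show ?case by simp (metis agr_mono max.cobounded1 max.cobounded2)
next
  case (Imp \<phi> \<psi>) then show ?case by simp (metis agr_mono max.cobounded1 max.cobounded2)
qed auto



lemma image_uminus_iff: "(X::'a set) \<in> uminus ` Y \<longleftrightarrow> -X \<in> Y"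
  by (metis double_compl image_iff)

lemma bDelta_iff: "X \<in> bDelta n \<longleftrightarrow> X \<in> bSigma n \<and> -X \<in> bSigma n"
  by (simp add: bDelta_def bPi_def image_uminus_iff)

lemma ld_open:
  assumes "\<forall>f. \<exists>k::nat. \<forall>g. agr k g f \<longrightarrow> P g = P f"
  shows "open {f. P f}"
  unfolding open_baire using assms unfolding agr_def by (metis mem_Collect_eq)

lemma ld_delta1:
  assumes "\<forall>f. \<exists>k::nat. \<forall>g. agr k g f \<longrightarrow> P g = P f"
  shows "{f. P f} \<in> bDelta 1"
proof -
  have "open {f. P f}" by (rule ld_open[OF assms])
  moreover have "open {f. \<not> P f}" by (rule ld_open) (use assms in metis)
  moreover have "- {f. P f} = {f. \<not> P f}" by auto
  ultimately show ?thesis by (simp add: bDelta_iff)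
qed

lemma bSigma_SS: "X \<in> bSigma (Suc (Suc n)) \<longleftrightarrow> (\<exists>B. (\<forall>i::nat. B i \<in> bSigma (Suc n)) \<and> X = (\<Union>i::nat. - B i))"
proof
  assume "X \<in> bSigma (Suc (Suc n))"
  then obtain A where A: "\<forall>i::nat. A i \<in> uminus ` bSigma (Suc n)" "X = (\<Union>i::nat. A i)" by auto
  then show "\<exists>B. (\<forall>i::nat. B i \<in> bSigma (Suc n)) \<and> X = (\<Union>i::nat. - B i)"
    by (intro exI[of _ "\<lambda>i. - A i"]) (auto simp: image_uminus_iff)
next
  assume "\<exists>B. (\<forall>i::nat. B i \<in> bSigma (Suc n)) \<and> X = (\<Union>i::nat. - B i)"
  then obtain B where "\<forall>i::nat. B i \<in> bSigma (Suc n)" "X = (\<Union>i::nat. - B i)" by blast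
  then show "X \<in> bSigma (Suc (Suc n))" by (auto simp: image_uminus_iff intro!: exI[of _ "\<lambda>i. - B i"])
qed

lemma SSI:
  assumes "\<And>i::nat. B i \<in> bSigma (Suc n)"
  shows "(\<Union>i::nat. - B i) \<in> bSigma (Suc (Suc n))"
proof -
  have "\<exists>B'. (\<forall>i::nat. B' i \<in> bSigma (Suc n)) \<and> (\<Union>i::nat. - B i) = (\<Union>i::nat. - B' i)"
    using assms by (intro exI[of _ B] conjI allI) auto
  then show ?thesis by (rule iffD2[OF bSigma_SS])
qed

lemma SSE:
  assumes "X \<in> bSigma (Suc (Suc n))"
  obtains B where "\<forall>i::nat. B i \<in> bSigma (Suc n)" "X = (\<Union>i::nat. - B i)"
proof -
  have "\<exists>B. (\<forall>i::nat. B i \<in> bSigma (Suc n)) \<and> X = (\<Union>i::nat. - B i)" by (rule iffD1[OF bSigma_SS assms])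
  then obtain B where "(\<forall>i::nat. B i \<in> bSigma (Suc n)) \<and> X = (\<Union>i::nat. - B i)" by (rule exE)
  then show ?thesis using that by blast
qed

lemma UN_pair: "(\<Union>i::nat. \<Union>j::nat. X i j) = (\<Union>k::nat. X (fst (prod_decode k)) (snd (prod_decode k)))"
proof (rule set_eqI)
  fix x
  show "x \<in> (\<Union>i::nat. \<Union>j::nat. X i j) \<longleftrightarrow> x \<in> (\<Union>k::nat. X (fst (prod_decode k)) (snd (prod_decode k)))"
  proof
    assume "x \<in> (\<Union>i::nat. \<Union>j::nat. X i j)"
    then obtain i j where "x \<in> X i j" by blast
    then have "x \<in> X (fst (prod_decode (prod_encode (i,j)))) (snd (prod_decode (prod_encode (i,j))))" by simp
    then show "x \<in> (\<Union>k::nat. X (fst (prod_decode k)) (snd (prod_decode k)))" by blast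
  qed blast
qed

lemma sigma_UN: "(\<And>i::nat. A i \<in> bSigma (Suc n)) \<Longrightarrow> (\<Union>i::nat. A i) \<in> bSigma (Suc n)"
proof (cases n)
  case 0
  assume "\<And>i::nat. A i \<in> bSigma (Suc n)"
  then show ?thesis using 0 by auto
next
  case (Suc m)
  assume a: "\<And>i::nat. A i \<in> bSigma (Suc n)"
  have "\<forall>i::nat. \<exists>B. (\<forall>j::nat. B j \<in> bSigma (Suc m)) \<and> A i = (\<Union>j::nat. - B j)"
  proof
    fix i
    have "A i \<in> bSigma (Suc (Suc m))" using a Suc by simp
    then obtain B where "\<forall>j::nat. B j \<in> bSigma (Suc m)" "A i = (\<Union>j::nat. - B j)" by (rule SSE)
    then show "\<exists>B. (\<forall>j::nat. B j \<in> bSigma (Suc m)) \<and> A i = (\<Union>j::nat. - B j)" by (intro exI[of _ B] conjI)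
  qed
  from choice[OF this] obtain B where B: "\<forall>i::nat. (\<forall>j::nat. B i j \<in> bSigma (Suc m)) \<and> A i = (\<Union>j::nat. - B i j)"
    by (elim exE) (rule that)
  have "(\<Union>i::nat. A i) = (\<Union>i::nat. \<Union>j::nat. - B i j)" using B by auto
  also have "\<dots> = (\<Union>k::nat. - B (fst (prod_decode k)) (snd (prod_decode k)))" by (rule UN_pair)
  finally have eq: "(\<Union>i::nat. A i) = (\<Union>k::nat. - B (fst (prod_decode k)) (snd (prod_decode k)))" .
  have "(\<Union>k::nat. - B (fst (prod_decode k)) (snd (prod_decode k))) \<in> bSigma (Suc (Suc m))"
    by (rule SSI) (use B in blast)
  then show ?thesis using eq Suc by simp
qed

lemma sigma_Un: "A \<in> bSigma (Suc n) \<Longrightarrow> B \<in> bSigma (Suc n) \<Longrightarrow> A \<union> B \<in> bSigma (Suc n)"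
proof -
  assume "A \<in> bSigma (Suc n)" "B \<in> bSigma (Suc n)"
  then have "(\<Union>i::nat. if i = 0 then A else B) \<in> bSigma (Suc n)" by (intro sigma_UN) auto
  moreover have "(\<Union>i::nat. if i = 0 then A else B) = A \<union> B"
  proof
    show "(\<Union>i::nat. if i = 0 then A else B) \<subseteq> A \<union> B" by auto
    have "A \<subseteq> (\<Union>i::nat. if i = 0 then A else B)" by (rule SUP_upper2[of 0]) auto
    moreover have "B \<subseteq> (\<Union>i::nat. if i = 0 then A else B)" by (rule SUP_upper2[of 1]) auto
    ultimately show "A \<union> B \<subseteq> (\<Union>i::nat. if i = 0 then A else B)" by blast
  qed
  ultimately show ?thesis by simp
qed

lemma sigma_Int: "A \<in> bSigma (Suc n) \<Longrightarrow> B \<in> bSigma (Suc n) \<Longrightarrow> A \<inter> B \<in> bSigma (Suc n)"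
proof (cases n)
  case 0
  assume "A \<in> bSigma (Suc n)" "B \<in> bSigma (Suc n)"
  then show ?thesis using 0 by auto
next
  case (Suc m)
  assume hA: "A \<in> bSigma (Suc n)" and hB: "B \<in> bSigma (Suc n)"
  from hA Suc have "A \<in> bSigma (Suc (Suc m))" by simp
  then obtain BA where BA: "\<forall>i::nat. BA i \<in> bSigma (Suc m)" "A = (\<Union>i::nat. - BA i)" by (rule SSE)
  from hB Suc have "B \<in> bSigma (Suc (Suc m))" by simp
  then obtain BB where BB: "\<forall>i::nat. BB i \<in> bSigma (Suc m)" "B = (\<Union>i::nat. - BB i)" by (rule SSE)
  have "A \<inter> B = (\<Union>i::nat. \<Union>j::nat. - (BA i \<union> BB j))" using BA BB by auto
  also have "\<dots> = (\<Union>k::nat. - (BA (fst (prod_decode k)) \<union> BB (snd (prod_decode k))))" by (rule UN_pair)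
  finally have eq: "A \<inter> B = (\<Union>k::nat. - (BA (fst (prod_decode k)) \<union> BB (snd (prod_decode k))))" .
  have "(\<Union>k::nat. - (BA (fst (prod_decode k)) \<union> BB (snd (prod_decode k)))) \<in> bSigma (Suc (Suc m))"
    by (rule SSI, rule sigma_Un) (use BA BB in auto)
  then show ?thesis using eq Suc by simp
qed

lemma sigma_empty_UNIV: "{} \<in> bSigma (Suc n) \<and> UNIV \<in> bSigma (Suc n)"
proof (induction n)
  case 0 then show ?case by auto
next
  case (Suc n)
  have "(\<Union>i::nat. - UNIV) \<in> bSigma (Suc (Suc n))" by (rule SSI) (use Suc in blast)
  moreover have "(\<Union>i::nat. - {}) \<in> bSigma (Suc (Suc n))" by (rule SSI) (use Suc in blast)
  ultimately show ?case by simp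
qed

lemma delta_comb:
  assumes "\<forall>j<(L::nat). {f. P j f} \<in> bDelta (Suc n)"
    and "\<forall>p p'. (\<forall>j<L. p j = p' j) \<longrightarrow> Q p = Q p'"
  shows "{f. Q (\<lambda>j. P j f)} \<in> bDelta (Suc n)"
  using assms
proof (induction L arbitrary: Q)
  case 0
  then have "\<forall>f. Q (\<lambda>j. P j f) = Q (\<lambda>_. False)" by blast
  then have "{f. Q (\<lambda>j. P j f)} = {} \<or> {f. Q (\<lambda>j. P j f)} = UNIV" by auto
  then show ?case using sigma_empty_UNIV by (auto simp: bDelta_iff)
next
  case (Suc L)
  have h1: "{f. Q ((\<lambda>j. P j f)(L := True))} \<in> bDelta (Suc n)"
    using Suc.IH[of "\<lambda>p. Q (p(L := True))"] Suc.prems by auto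
  have h2: "{f. Q ((\<lambda>j. P j f)(L := False))} \<in> bDelta (Suc n)"
    using Suc.IH[of "\<lambda>p. Q (p(L := False))"] Suc.prems by auto
  have h3: "{f. P L f} \<in> bDelta (Suc n)" using Suc.prems by auto
  have eq: "{f. Q (\<lambda>j. P j f)} = ({f. P L f} \<inter> {f. Q ((\<lambda>j. P j f)(L := True))}) \<union>
       (- {f. P L f} \<inter> {f. Q ((\<lambda>j. P j f)(L := False))})"
  proof (rule set_eqI)
    fix f
    have e: "(\<lambda>j. P j f)(L := P L f) = (\<lambda>j. P j f)" by auto
    show "f \<in> {f. Q (\<lambda>j. P j f)} \<longleftrightarrow> f \<in> ({f. P L f} \<inter> {f. Q ((\<lambda>j. P j f)(L := True))}) \<union>
       (- {f. P L f} \<inter> {f. Q ((\<lambda>j. P j f)(L := False))})"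
      by (cases "P L f") (use e in auto)
  qed
  have cl: "X \<in> bDelta (Suc n) \<Longrightarrow> Y \<in> bDelta (Suc n) \<Longrightarrow> X \<inter> Y \<in> bDelta (Suc n) \<and> X \<union> Y \<in> bDelta (Suc n) \<and> -X \<in> bDelta (Suc n)" for X Y
    by (auto simp: bDelta_iff intro!: sigma_Int sigma_Un)
  have c1: "{f. P L f} \<inter> {f. Q ((\<lambda>j. P j f)(L := True))} \<in> bDelta (Suc n)"
    using cl[OF h3 h1] by (elim conjE)
  have c0: "- {f. P L f} \<in> bDelta (Suc n)" using cl[OF h3 h1] by (elim conjE)
  have c2: "- {f. P L f} \<inter> {f. Q ((\<lambda>j. P j f)(L := False))} \<in> bDelta (Suc n)"
    using cl[OF c0 h2] by (elim conjE)
  show ?case unfolding eq using cl[OF c1 c2] by (elim conjE)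
qed


lemma sigma_mono: "bSigma (Suc n) \<subseteq> bSigma (Suc (Suc n))"
proof (induction n)
  case 0
  show ?case
  proof
    fix U assume "U \<in> bSigma (Suc 0)"
    then have oU: "open U" by simp
    define W where "W k = {f. \<forall>g. agr k g f \<longrightarrow> g \<in> U}" for k
    have "open (- W k)" for k
      unfolding open_baire
    proof
      fix f assume "f \<in> - W k"
      then obtain g where g: "agr k g f" "g \<notin> U" by (auto simp: W_def)
      have "h \<in> - W k" if "\<forall>j<k. h j = f j" for h
        using g that by (auto simp: W_def agr_def)
      then show "\<exists>k'::nat. \<forall>h. (\<forall>j<k'. h j = f j) \<longrightarrow> h \<in> - W k" by blast
    qed
    moreover have "U = (\<Union>k::nat. - (- W k))"
    proof
      show "U \<subseteq> (\<Union>k::nat. - (- W k))" using oU unfolding open_baire W_def agr_def by blast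
      show "(\<Union>k::nat. - (- W k)) \<subseteq> U" by (auto simp: W_def agr_def)
    qed
    ultimately show "U \<in> bSigma (Suc (Suc 0))"
      using SSI[of "\<lambda>k. - W k" 0] by simp
  qed
next
  case (Suc n)
  show ?case
  proof
    fix X assume "X \<in> bSigma (Suc (Suc n))"
    then obtain B where B: "\<forall>i::nat. B i \<in> bSigma (Suc n)" "X = (\<Union>i::nat. - B i)" by (rule SSE)
    have "(\<Union>i::nat. - B i) \<in> bSigma (Suc (Suc (Suc n)))" by (rule SSI) (use B Suc in blast)
    then show "X \<in> bSigma (Suc (Suc (Suc n)))" using B by simp
  qed
qed

lemma sigma_delta: "X \<in> bSigma (Suc n) \<Longrightarrow> X \<in> bDelta (Suc (Suc n))"
proof -
  assume a: "X \<in> bSigma (Suc n)"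
  have "-X = (\<Union>i::nat. - X)" by simp
  moreover have "(\<Union>i::nat. - X) \<in> bSigma (Suc (Suc n))" by (rule SSI) (rule a)
  ultimately have "-X \<in> bSigma (Suc (Suc n))" by simp
  then show ?thesis using a sigma_mono by (auto simp: bDelta_iff)
qed

lemma fm_sets: "\<forall>\<phi> e. (SigmaF (Suc k) \<phi> \<longrightarrow> {f. holds f e \<phi>} \<in> bSigma (Suc k)) \<and>
                       (PiF (Suc k) \<phi> \<longrightarrow> - {f. holds f e \<phi>} \<in> bSigma (Suc k))"
proof (induction k)
  case 0
  have q: "qfree q \<Longrightarrow> {f. holds f e q} \<in> bDelta 1" for q e
    by (rule ld_delta1) (use qfree_ld in blast)
  show ?case
  proof (intro allI conjI impI)
    fix \<phi> e assume "SigmaF (Suc 0) \<phi>"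
    then obtain x q where "\<phi> = Ex x q" "qfree q" by auto
    then have "{f. holds f e \<phi>} = (\<Union>n::nat. {f. holds f (e(x:=n)) q})" by auto
    moreover have "(\<Union>n::nat. {f. holds f (e(x:=n)) q}) \<in> bSigma (Suc 0)"
      by (rule sigma_UN) (use q[OF \<open>qfree q\<close>] in \<open>simp add: bDelta_iff\<close>)
    ultimately show "{f. holds f e \<phi>} \<in> bSigma (Suc 0)" by simp
  next
    fix \<phi> e assume "PiF (Suc 0) \<phi>"
    then obtain x q where "\<phi> = All x q" "qfree q" by auto
    then have "- {f. holds f e \<phi>} = (\<Union>n::nat. - {f. holds f (e(x:=n)) q})" by auto
    moreover have "(\<Union>n::nat. - {f. holds f (e(x:=n)) q}) \<in> bSigma (Suc 0)"
      by (rule sigma_UN) (use q[OF \<open>qfree q\<close>] in \<open>simp add: bDelta_iff\<close>)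
    ultimately show "- {f. holds f e \<phi>} \<in> bSigma (Suc 0)" by simp
  qed
next
  case (Suc k)
  show ?case
  proof (intro allI conjI impI)
    fix \<phi> e assume "SigmaF (Suc (Suc k)) \<phi>"
    then obtain x q where "\<phi> = Ex x q" "PiF (Suc k) q" by auto
    then have "{f. holds f e \<phi>} = (\<Union>n::nat. - (- {f. holds f (e(x:=n)) q}))" by auto
    moreover have "(\<Union>n::nat. - (- {f. holds f (e(x:=n)) q})) \<in> bSigma (Suc (Suc k))"
      by (rule SSI) (use Suc \<open>PiF (Suc k) q\<close> in blast)
    ultimately show "{f. holds f e \<phi>} \<in> bSigma (Suc (Suc k))" by simp
  next
    fix \<phi> e assume "PiF (Suc (Suc k)) \<phi>"
    then obtain x q where "\<phi> = All x q" "SigmaF (Suc k) q" by auto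
    then have "- {f. holds f e \<phi>} = (\<Union>n::nat. - {f. holds f (e(x:=n)) q})" by auto
    moreover have "(\<Union>n::nat. - {f. holds f (e(x:=n)) q}) \<in> bSigma (Suc (Suc k))"
      by (rule SSI) (use Suc \<open>SigmaF (Suc k) q\<close> in blast)
    ultimately show "- {f. holds f e \<phi>} \<in> bSigma (Suc (Suc k))" by simp
  qed
qed

lemma limit_sigma:
  assumes "\<forall>n::nat. A n \<in> bDelta (Suc k)"
    and "\<forall>f. eventually (\<lambda>n. (f \<in> A n) = (f \<in> S)) sequentially"
  shows "S \<in> bSigma (Suc (Suc k))"
proof -
  have eq: "S = (\<Union>N::nat. - (\<Union>n::nat. - A (n + N)))"
  proof
    show "S \<subseteq> (\<Union>N::nat. - (\<Union>n::nat. - A (n + N)))"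
    proof
      fix f assume "f \<in> S"
      have "\<exists>N::nat. \<forall>n\<ge>N. (f \<in> A n) = (f \<in> S)" using assms(2) unfolding eventually_sequentially by simp
      then obtain N where "\<forall>n\<ge>N. (f \<in> A n) = (f \<in> S)" by (elim exE) (rule that)
      then have "\<forall>n. f \<in> A (n + N)" using \<open>f \<in> S\<close> by simp
      then show "f \<in> (\<Union>N::nat. - (\<Union>n::nat. - A (n + N)))" by blast
    qed
    show "(\<Union>N::nat. - (\<Union>n::nat. - A (n + N))) \<subseteq> S"
    proof
      fix f assume "f \<in> (\<Union>N::nat. - (\<Union>n::nat. - A (n + N)))"
      then obtain N where N: "\<forall>n::nat. f \<in> A (n + N)" by auto
      have "\<exists>N::nat. \<forall>n\<ge>N. (f \<in> A n) = (f \<in> S)" using assms(2) unfolding eventually_sequentially by simp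
      then obtain M where "\<forall>n\<ge>M. (f \<in> A n) = (f \<in> S)" by (elim exE) (rule that)
      then show "f \<in> S" using N[rule_format, of M] by auto
    qed
  qed
  have "(\<Union>n::nat. - A (n + N)) \<in> bSigma (Suc k)" for N
    using assms(1) by (intro sigma_UN) (auto simp: bDelta_iff)
  then have "(\<Union>N::nat. - (\<Union>n::nat. - A (n + N))) \<in> bSigma (Suc (Suc k))" by (rule SSI)
  then show ?thesis using eq by simp
qed

lemma limit_delta:
  assumes "\<forall>n::nat. A n \<in> bDelta (Suc k)"
    and "\<forall>f. eventually (\<lambda>n. (f \<in> A n) = (f \<in> S)) sequentially"
  shows "S \<in> bDelta (Suc (Suc k))"
proof -
  have "S \<in> bSigma (Suc (Suc k))" by (rule limit_sigma[OF assms])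
  moreover have "- S \<in> bSigma (Suc (Suc k))"
  proof (rule limit_sigma[of "\<lambda>n. - A n"])
    show "\<forall>n::nat. - A n \<in> bDelta (Suc k)" using assms(1) by (auto simp: bDelta_iff)
    show "\<forall>f. eventually (\<lambda>n. (f \<in> - A n) = (f \<in> - S)) sequentially"
      using assms(2) by (auto elim: eventually_mono)
  qed
  ultimately show ?thesis by (simp add: bDelta_iff)
qed




lemma teval_cong: "(\<forall>x\<in>fv_trm t. e x = e' x) \<Longrightarrow> teval f e t = teval f e' t"
proof (induction t)
  case (App k w ts)
  then have "map (teval f e) ts = map (teval f e') ts" by (auto simp: map_eq_conv)
  then show ?case by (simp only: teval.simps)
next
  case (GFap k G ts t)
  then have "map (teval f e) ts = map (teval f e') ts" by (auto simp: map_eq_conv)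
  moreover have "teval f e t = teval f e' t" using GFap by auto
  ultimately show ?case by (simp only: teval.simps)
qed auto

lemma open_prefix:
  assumes "open (U::(nat\<Rightarrow>nat) set)"
  shows "(\<exists>n. \<forall>g. (\<forall>j<Suc n. g j = f j) \<longrightarrow> g \<in> U) \<longleftrightarrow> f \<in> U"
proof
  assume "\<exists>n. \<forall>g. (\<forall>j<Suc n. g j = f j) \<longrightarrow> g \<in> U"
  then show "f \<in> U" by blast
next
  assume "f \<in> U"
  then obtain k where k: "\<forall>g. (\<forall>j<k. g j = f j) \<longrightarrow> g \<in> U" using assms unfolding open_baire by blast
  have "\<forall>g. (\<forall>j<Suc k. g j = f j) \<longrightarrow> g \<in> U" using k by auto
  then show "\<exists>n. \<forall>g. (\<forall>j<Suc n. g j = f j) \<longrightarrow> g \<in> U" by blast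
qed

lemma constr:
  "\<forall>(A::nat \<Rightarrow> (nat\<Rightarrow>nat) set) t. (\<forall>i. A i \<in> bSigma (Suc m)) \<longrightarrow> wf_trm t \<longrightarrow> fv_trm t \<subseteq> {x. Suc m < x} \<longrightarrow>
    (\<exists>\<phi> \<psi>. wf_fm \<phi> \<and> wf_fm \<psi> \<and> SigmaF (Suc m) \<phi> \<and> PiF (Suc m) \<psi> \<and>
      fv_fm \<phi> \<subseteq> fv_trm t \<and> fv_fm \<psi> \<subseteq> fv_trm t \<and>
      (\<forall>f e. holds f e \<phi> = (f \<in> A (teval f e t))) \<and> (\<forall>f e. holds f e \<psi> = (f \<notin> A (teval f e t))))"
proof (induction m)
  case 0
  show ?case
  proof (intro allI impI)
    fix A :: "nat \<Rightarrow> (nat\<Rightarrow>nat) set" and t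
    assume oA: "\<forall>i. A i \<in> bSigma (Suc 0)" and wt: "wf_trm t" and fvt: "fv_trm t \<subseteq> {x. Suc 0 < x}"
    define G where "G xs s = (if (\<forall>g. (\<forall>j<length s. g j = s!j) \<longrightarrow> g \<in> A (hd xs)) then 1 else (0::nat))" for xs s
    define G' where "G' xs s = (if (\<forall>g. (\<forall>j<length s. g j = s!j) \<longrightarrow> g \<in> A (hd xs)) then 0 else (1::nat))" for xs s
    define \<phi> where "\<phi> = Ex 1 (Eq (GFap 1 G [t] (Var 1)) (Cst 1))"
    define \<psi> where "\<psi> = All 1 (Eq (GFap 1 G' [t] (Var 1)) (Cst 1))"
    have te: "teval f (e(Suc 0:=n)) t = teval f e t" for f e n
      by (rule teval_cong) (use fvt in auto)
    have key: "(G [teval f e t] (map f [0..<Suc n]) = 1) \<longleftrightarrow> (\<forall>g. (\<forall>j<Suc n. g j = f j) \<longrightarrow> g \<in> A (teval f e t))" for f e n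
    proof -
      have L: "length (map f [0..<Suc n]) = Suc n" by simp
      have N: "(map f [0..<Suc n]) ! j = f j" if "j < Suc n" for j
        using that by (subst nth_map_upt) auto
      have "(\<forall>j<length (map f [0..<Suc n]). g j = (map f [0..<Suc n])!j) \<longleftrightarrow> (\<forall>j<Suc n. g j = f j)" for g
        using L N by auto
      then show ?thesis unfolding G_def by (simp del: upt_Suc)
    qed
    have key': "(G' [teval f e t] (map f [0..<Suc n]) = 1) \<longleftrightarrow> \<not> (G [teval f e t] (map f [0..<Suc n]) = 1)" for f e n
      unfolding G_def G'_def by (auto simp del: upt_Suc)
    have h1: "holds f e \<phi> = (f \<in> A (teval f e t))" for f e
    proof -
      have "holds f e \<phi> \<longleftrightarrow> (\<exists>n. G [teval f e t] (map f [0..<Suc n]) = 1)"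
        unfolding \<phi>_def by (simp add: te del: upt_Suc)
      also have "\<dots> \<longleftrightarrow> f \<in> A (teval f e t)" unfolding key
        by (rule open_prefix) (use oA in simp)
      finally show ?thesis .
    qed
    have h2: "holds f e \<psi> = (f \<notin> A (teval f e t))" for f e
    proof -
      have "holds f e \<psi> \<longleftrightarrow> (\<forall>n. G' [teval f e t] (map f [0..<Suc n]) = 1)"
        unfolding \<psi>_def by (simp add: te del: upt_Suc)
      also have "\<dots> \<longleftrightarrow> \<not> (\<exists>n. G [teval f e t] (map f [0..<Suc n]) = 1)" using key' by blast
      also have "\<dots> \<longleftrightarrow> f \<notin> A (teval f e t)" unfolding key
        by (subst open_prefix) (use oA in simp_all)
      finally show ?thesis .
    qed
    show "\<exists>\<phi> \<psi>. wf_fm \<phi> \<and> wf_fm \<psi> \<and> SigmaF (Suc 0) \<phi> \<and> PiF (Suc 0) \<psi> \<and>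
      fv_fm \<phi> \<subseteq> fv_trm t \<and> fv_fm \<psi> \<subseteq> fv_trm t \<and>
      (\<forall>f e. holds f e \<phi> = (f \<in> A (teval f e t))) \<and> (\<forall>f e. holds f e \<psi> = (f \<notin> A (teval f e t)))"
      apply (rule exI[of _ \<phi>], rule exI[of _ \<psi>])
      using h1 h2 wt unfolding \<phi>_def \<psi>_def by auto
  qed
next
  case (Suc m)
  show ?case
  proof (intro allI impI)
    fix A :: "nat \<Rightarrow> (nat\<Rightarrow>nat) set" and t
    assume sA: "\<forall>i. A i \<in> bSigma (Suc (Suc m))" and wt: "wf_trm t" and fvt: "fv_trm t \<subseteq> {x. Suc (Suc m) < x}"
    have "\<forall>i. \<exists>B. (\<forall>j::nat. B j \<in> bSigma (Suc m)) \<and> A i = (\<Union>j. - B j)"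
    proof
      fix i
      from sA[rule_format, of i] obtain B where "\<forall>j::nat. B j \<in> bSigma (Suc m)" "A i = (\<Union>j. - B j)" by (rule SSE)
      then show "\<exists>B. (\<forall>j::nat. B j \<in> bSigma (Suc m)) \<and> A i = (\<Union>j. - B j)" by (intro exI[of _ B] conjI)
    qed
    from choice[OF this] obtain B where B: "\<forall>i. (\<forall>j::nat. B i j \<in> bSigma (Suc m)) \<and> A i = (\<Union>j. - B i j)"
      by (elim exE) (rule that)
    define B' where "B' k = B (fst (prod_decode k)) (snd (prod_decode k))" for k
    define pc where "pc xs = prod_encode (xs!0, xs!1)" for xs :: "nat list"
    define x where "x = Suc (Suc m)"
    define t' where "t' = App 2 pc [t, Var x]"
    have "\<forall>i. B' i \<in> bSigma (Suc m)" using B unfolding B'_def by blast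
    moreover have "wf_trm t'" using wt unfolding t'_def by simp
    moreover have "fv_trm t' \<subseteq> {x. Suc m < x}" using fvt unfolding t'_def x_def by auto
    ultimately obtain \<phi>' \<psi>' where ih: "wf_fm \<phi>'" "wf_fm \<psi>'" "SigmaF (Suc m) \<phi>'" "PiF (Suc m) \<psi>'"
      "fv_fm \<phi>' \<subseteq> fv_trm t'" "fv_fm \<psi>' \<subseteq> fv_trm t'"
      "\<forall>f e. holds f e \<phi>' = (f \<in> B' (teval f e t'))" "\<forall>f e. holds f e \<psi>' = (f \<notin> B' (teval f e t'))"
      using Suc.IH by blast
    have te: "teval f (e(x:=n)) t' = prod_encode (teval f e t, n)" for f e n
    proof -
      have "teval f (e(x:=n)) t = teval f e t" by (rule teval_cong) (use fvt x_def in auto)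
      then show ?thesis unfolding t'_def pc_def by simp
    qed
    have B'e: "B' (prod_encode (a, n)) = B a n" for a n unfolding B'_def by simp
    define \<phi> where "\<phi> = Ex x \<psi>'"
    define \<psi> where "\<psi> = All x \<phi>'"
    have h1: "holds f e \<phi> = (f \<in> A (teval f e t))" for f e
    proof -
      have "holds f e \<phi> \<longleftrightarrow> (\<exists>n. f \<notin> B (teval f e t) n)" unfolding \<phi>_def using ih(8) te B'e by simp
      also have "\<dots> \<longleftrightarrow> f \<in> A (teval f e t)" using B by auto
      finally show ?thesis .
    qed
    have h2: "holds f e \<psi> = (f \<notin> A (teval f e t))" for f e
    proof -
      have "holds f e \<psi> \<longleftrightarrow> (\<forall>n. f \<in> B (teval f e t) n)" unfolding \<psi>_def using ih(7) te B'e by simp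
      also have "\<dots> \<longleftrightarrow> f \<notin> A (teval f e t)" using B by auto
      finally show ?thesis .
    qed
    have fv: "fv_trm t' - {x} \<subseteq> fv_trm t" unfolding t'_def by auto
    show "\<exists>\<phi> \<psi>. wf_fm \<phi> \<and> wf_fm \<psi> \<and> SigmaF (Suc (Suc m)) \<phi> \<and> PiF (Suc (Suc m)) \<psi> \<and>
      fv_fm \<phi> \<subseteq> fv_trm t \<and> fv_fm \<psi> \<subseteq> fv_trm t \<and>
      (\<forall>f e. holds f e \<phi> = (f \<in> A (teval f e t))) \<and> (\<forall>f e. holds f e \<psi> = (f \<notin> A (teval f e t)))"
      apply (rule exI[of _ \<phi>], rule exI[of _ \<psi>])
      using h1 h2 ih(1-6) fv unfolding \<phi>_def \<psi>_def by auto
  qed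
qed




definition good :: "nat \<Rightarrow> (nat\<Rightarrow>nat) set \<Rightarrow> (nat \<Rightarrow> (nat\<Rightarrow>nat) set) \<Rightarrow> bool" where
  "good k B C \<longleftrightarrow> (\<forall>n. C n \<in> bDelta (Suc k)) \<and> (k = 0 \<longrightarrow> (\<forall>n f g. agr n g f \<longrightarrow> (g \<in> C n \<longleftrightarrow> f \<in> C n))) \<and>
     (\<forall>f. f \<notin> B \<longrightarrow> (\<forall>n. f \<in> C n)) \<and> (\<forall>f. f \<in> B \<longrightarrow> eventually (\<lambda>n. f \<notin> C n) sequentially)"

lemma pi_approx: "B \<in> bSigma (Suc k) \<Longrightarrow> \<exists>C. good k B C"
proof (cases k)
  case 0
  assume hB: "B \<in> bSigma (Suc k)"
  then have oB: "open B" using 0 by simp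
  define C where "C n = {f. \<exists>g. agr n g f \<and> g \<notin> B}" for n
  have det: "agr n g f \<Longrightarrow> (g \<in> C n \<longleftrightarrow> f \<in> C n)" for n g f
    unfolding C_def agr_def by auto
  have "C n \<in> bDelta (Suc k)" for n
  proof -
    have "{f. f \<in> C n} \<in> bDelta 1"
      by (rule ld_delta1) (use det in blast)
    then show ?thesis using 0 by simp
  qed
  moreover have "\<forall>f. f \<notin> B \<longrightarrow> (\<forall>n. f \<in> C n)" unfolding C_def agr_def by auto
  moreover have "\<forall>f. f \<in> B \<longrightarrow> eventually (\<lambda>n. f \<notin> C n) sequentially"
  proof (intro allI impI)
    fix f assume "f \<in> B"
    then obtain K where K: "\<forall>g. (\<forall>j<K. g j = f j) \<longrightarrow> g \<in> B" using oB unfolding open_baire by blast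
    have "f \<notin> C n" if "K \<le> n" for n
    proof
      assume "f \<in> C n" then obtain g where "agr n g f" "g \<notin> B" by (auto simp: C_def)
      then have "\<forall>j<K. g j = f j" using that by (auto simp: agr_def)
      then show False using K \<open>g \<notin> B\<close> by blast
    qed
    then have "\<forall>n\<ge>K. f \<notin> C n" by blast
    then show "eventually (\<lambda>n. f \<notin> C n) sequentially" unfolding eventually_sequentially by blast
  qed
  ultimately show ?thesis using det unfolding good_def by blast
next
  case (Suc j)
  assume hB: "B \<in> bSigma (Suc k)"
  then have "B \<in> bSigma (Suc (Suc j))" using Suc by simp
  then obtain E where E: "\<forall>l::nat. E l \<in> bSigma (Suc j)" "B = (\<Union>l. - E l)" by (rule SSE)
  define C where "C n = {f. \<forall>l<Suc n. f \<in> E l}" for n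
  have "C n \<in> bDelta (Suc k)" for n
  proof -
    have "{f. (\<lambda>p. \<forall>l<Suc n. p l) (\<lambda>l. f \<in> E l)} \<in> bDelta (Suc (Suc j))"
    proof (rule delta_comb[where P = "\<lambda>l f. f \<in> E l" and Q = "\<lambda>p. \<forall>l<Suc n. p l" and L = "Suc n"])
      show "\<forall>l<Suc n. {f. f \<in> E l} \<in> bDelta (Suc (Suc j))" using E sigma_delta by simp
      show "\<forall>p p'. (\<forall>l<Suc n. p l = p' l) \<longrightarrow> (\<forall>l<Suc n. p l) = (\<forall>l<Suc n. p' l)" by auto
    qed
    then show ?thesis using Suc unfolding C_def by simp
  qed
  moreover have "\<forall>f. f \<notin> B \<longrightarrow> (\<forall>n. f \<in> C n)" using E unfolding C_def by auto
  moreover have "\<forall>f. f \<in> B \<longrightarrow> eventually (\<lambda>n. f \<notin> C n) sequentially"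
  proof (intro allI impI)
    fix f assume "f \<in> B"
    then obtain l where "f \<notin> E l" using E by auto
    then have "\<forall>n\<ge>l. f \<notin> C n" unfolding C_def using le_imp_less_Suc by blast
    then show "eventually (\<lambda>n. f \<notin> C n) sequentially" unfolding eventually_sequentially by blast
  qed
  ultimately show ?thesis using Suc unfolding good_def by blast
qed

lemma approx:
  assumes "S \<in> bDelta (Suc (Suc k))"
  shows "\<exists>A. (\<forall>n. A n \<in> bDelta (Suc k)) \<and> (k = 0 \<longrightarrow> (\<forall>n f g. agr n g f \<longrightarrow> (g \<in> A n \<longleftrightarrow> f \<in> A n))) \<and>
     (\<forall>f. eventually (\<lambda>n. (f \<in> A n) = (f \<in> S)) sequentially)"
proof -
  have s1: "S \<in> bSigma (Suc (Suc k))" and s2: "- S \<in> bSigma (Suc (Suc k))" using assms by (auto simp: bDelta_iff)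
  from s1 obtain BS where BS: "\<forall>i. BS i \<in> bSigma (Suc k)" "S = (\<Union>i::nat. - BS i)" by (rule SSE)
  from s2 obtain BT where BT: "\<forall>i. BT i \<in> bSigma (Suc k)" "- S = (\<Union>i::nat. - BT i)" by (rule SSE)
  have "\<forall>i. \<exists>C. good k (BS i) C" using BS pi_approx by blast
  from choice[OF this] obtain C where C: "\<forall>i. good k (BS i) (C i)" by (elim exE) (rule that)
  have "\<forall>i. \<exists>C. good k (BT i) C" using BT pi_approx by blast
  from choice[OF this] obtain D where D: "\<forall>i. good k (BT i) (D i)" by (elim exE) (rule that)
  define A where "A n = {f. \<exists>i\<le>n. f \<in> C i n \<and> (\<forall>i'<i. f \<notin> C i' n \<and> f \<notin> D i' n)}" for n
  have Adelta: "A n \<in> bDelta (Suc k)" for n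
  proof -
    define P where "P j f = (if even j then f \<in> C (j div 2) n else f \<in> D (j div 2) n)" for j f
    define Q where "Q p = (\<exists>i\<le>n. p (2*i) \<and> (\<forall>i'<i. \<not> p (2*i') \<and> \<not> p (2*i'+1)))" for p :: "nat \<Rightarrow> bool"
    have "{f. Q (\<lambda>j. P j f)} \<in> bDelta (Suc k)"
    proof (rule delta_comb[where P = P and Q = Q and L = "2 * Suc n"])
      show "\<forall>j<2 * Suc n. {f. P j f} \<in> bDelta (Suc k)"
      proof (intro allI impI)
        fix j assume "j < 2 * Suc n"
        have "{f. P j f} = (if even j then C (j div 2) n else D (j div 2) n)" unfolding P_def by auto
        then show "{f. P j f} \<in> bDelta (Suc k)" using C D unfolding good_def by simp
      qed
      show "\<forall>p p'. (\<forall>j<2 * Suc n. p j = p' j) \<longrightarrow> Q p = Q p'"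
      proof (intro allI impI)
        fix p p' :: "nat \<Rightarrow> bool" assume H: "\<forall>j<2 * Suc n. p j = p' j"
        have h1: "p (2*i) = p' (2*i)" if "i \<le> n" for i using H that by auto
        have h2: "p (2*i'+1) = p' (2*i'+1)" if "i' < n" for i' using H that by auto
        have h3: "p (2*i') = p' (2*i')" if "i' < n" for i' using h1 that by auto
        show "Q p = Q p'" unfolding Q_def
        proof
          assume "\<exists>i\<le>n. p (2*i) \<and> (\<forall>i'<i. \<not> p (2*i') \<and> \<not> p (2*i'+1))"
          then obtain i where "i \<le> n" "p (2*i)" "\<forall>i'<i. \<not> p (2*i') \<and> \<not> p (2*i'+1)" by blast
          then show "\<exists>i\<le>n. p' (2*i) \<and> (\<forall>i'<i. \<not> p' (2*i') \<and> \<not> p' (2*i'+1))"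
            using h1 h2 h3 by (intro exI[of _ i]) auto
        next
          assume "\<exists>i\<le>n. p' (2*i) \<and> (\<forall>i'<i. \<not> p' (2*i') \<and> \<not> p' (2*i'+1))"
          then obtain i where "i \<le> n" "p' (2*i)" "\<forall>i'<i. \<not> p' (2*i') \<and> \<not> p' (2*i'+1)" by blast
          then show "\<exists>i\<le>n. p (2*i) \<and> (\<forall>i'<i. \<not> p (2*i') \<and> \<not> p (2*i'+1))"
            using h1 h2 h3 by (intro exI[of _ i]) auto
        qed
      qed
    qed
    moreover have "{f. Q (\<lambda>j. P j f)} = A n" unfolding A_def Q_def P_def by simp
    ultimately show ?thesis by simp
  qed
  have Adet: "k = 0 \<longrightarrow> (\<forall>n f g. agr n g f \<longrightarrow> (g \<in> A n \<longleftrightarrow> f \<in> A n))"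
  proof (intro impI allI)
    fix n f g assume "k = 0" "agr n g f"
    then have "\<And>i. (g \<in> C i n) = (f \<in> C i n)" "\<And>i. (g \<in> D i n) = (f \<in> D i n)"
      using C D unfolding good_def by blast+
    then show "g \<in> A n \<longleftrightarrow> f \<in> A n" unfolding A_def by simp
  qed
  have Aev: "eventually (\<lambda>n. (f \<in> A n) = (f \<in> S)) sequentially" for f
  proof -
    have ex: "\<exists>i. f \<notin> BS i \<or> f \<notin> BT i"
    proof (cases "f \<in> S")
      case True then show ?thesis using BS by auto
    next
      case False then have "f \<in> - S" by simp
      then show ?thesis using BT by auto
    qed
    define i0 where "i0 = (LEAST i. f \<notin> BS i \<or> f \<notin> BT i)"
    have i0: "f \<notin> BS i0 \<or> f \<notin> BT i0" unfolding i0_def by (rule LeastI_ex[OF ex])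
    have below: "f \<in> BS i \<and> f \<in> BT i" if "i < i0" for i
      using not_less_Least[OF that[unfolded i0_def]] by blast
    have ev1: "eventually (\<lambda>n. \<forall>i\<in>{..<i0}. f \<notin> C i n \<and> f \<notin> D i n) sequentially"
    proof (rule eventually_ball_finite)
      show "\<forall>i\<in>{..<i0}. eventually (\<lambda>n. f \<notin> C i n \<and> f \<notin> D i n) sequentially"
      proof
        fix i assume "i \<in> {..<i0}"
        then have "f \<in> BS i" "f \<in> BT i" using below by auto
        then have "eventually (\<lambda>n. f \<notin> C i n) sequentially" "eventually (\<lambda>n. f \<notin> D i n) sequentially"
          using C D unfolding good_def by blast+
        then show "eventually (\<lambda>n. f \<notin> C i n \<and> f \<notin> D i n) sequentially" by (rule eventually_conj)
      qed
    qed simp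
    have ev2: "eventually (\<lambda>n. i0 \<le> n) sequentially" by simp
    show ?thesis
    proof (cases "f \<in> S")
      case True
      then have "f \<notin> (\<Union>i::nat. - BT i)" using BT(2) by auto
      then have "f \<notin> BS i0" using i0 by auto
      then have inC: "\<forall>n. f \<in> C i0 n" using C unfolding good_def by blast
      show ?thesis
      proof (rule eventually_mono[OF eventually_conj[OF ev1 ev2]])
        fix n assume "(\<forall>i\<in>{..<i0}. f \<notin> C i n \<and> f \<notin> D i n) \<and> i0 \<le> n"
        then have "f \<in> A n" using inC unfolding A_def by auto
        then show "(f \<in> A n) = (f \<in> S)" using True by simp
      qed
    next
      case False
      then have "f \<notin> (\<Union>i::nat. - BS i)" using BS(2) by auto
      then have inBS: "f \<in> BS i0" by auto
      then have "f \<notin> BT i0" using i0 by auto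
      then have inD: "\<forall>n. f \<in> D i0 n" using D unfolding good_def by blast
      have ev3: "eventually (\<lambda>n. f \<notin> C i0 n) sequentially" using C inBS unfolding good_def by blast
      show ?thesis
      proof (rule eventually_mono[OF eventually_conj[OF ev1 eventually_conj[OF ev2 ev3]]])
        fix n assume h: "(\<forall>i\<in>{..<i0}. f \<notin> C i n \<and> f \<notin> D i n) \<and> i0 \<le> n \<and> f \<notin> C i0 n"
        have "f \<notin> A n"
        proof
          assume "f \<in> A n"
          then obtain i where i: "i \<le> n" "f \<in> C i n" "\<forall>i'<i. f \<notin> C i' n \<and> f \<notin> D i' n"
            unfolding A_def by blast
          show False
          proof (cases i i0 rule: linorder_cases)
            case less then show False using h i by auto
          next
            case equal then show False using h i by auto
          next
            case greater then show False using i inD by auto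
          qed
        qed
        then show "(f \<in> A n) = (f \<in> S)" using False by simp
      qed
    qed
  qed
  show ?thesis using Adelta Adet Aev by blast
qed




lemma finite_syms_trm: "finite (syms_trm t)"
  by (induction t) auto

lemma finite_syms_fm: "finite (syms_fm \<phi>)"
  by (induction \<phi>) (auto simp: finite_syms_trm)

datatype ctrm = CVar nat | CCst nat | CApp nat "ctrm list" | CFap ctrm | CGF nat "ctrm list" ctrm
datatype cfm = CEq ctrm ctrm | CPred nat "ctrm list" | CNeg cfm | CConj cfm cfm | CDisj cfm cfm
  | CImp cfm cfm | CEx nat cfm | CAll nat cfm

instance ctrm :: countable by countable_datatype
instance cfm :: countable by countable_datatype

fun dec_t :: "(nat \<Rightarrow> sym) \<Rightarrow> ctrm \<Rightarrow> trm" where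
  "dec_t d (CVar x) = Var x"
| "dec_t d (CCst n) = Cst n"
| "dec_t d (CApp c ts) = (case d c of SFun k w \<Rightarrow> App k w (map (dec_t d) ts) | _ \<Rightarrow> Var 0)"
| "dec_t d (CFap t) = Fap (dec_t d t)"
| "dec_t d (CGF c ts t) = (case d c of SGF k G \<Rightarrow> GFap k G (map (dec_t d) ts) (dec_t d t) | _ \<Rightarrow> Var 0)"

fun dec_f :: "(nat \<Rightarrow> sym) \<Rightarrow> cfm \<Rightarrow> fm" where
  "dec_f d (CEq s t) = Eq (dec_t d s) (dec_t d t)"
| "dec_f d (CPred c ts) = (case d c of SPred k p \<Rightarrow> Pred k p (map (dec_t d) ts) | _ \<Rightarrow> Eq (Var 0) (Var 0))"
| "dec_f d (CNeg \<phi>) = Neg (dec_f d \<phi>)"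
| "dec_f d (CConj \<phi> \<psi>) = Conj (dec_f d \<phi>) (dec_f d \<psi>)"
| "dec_f d (CDisj \<phi> \<psi>) = Disj (dec_f d \<phi>) (dec_f d \<psi>)"
| "dec_f d (CImp \<phi> \<psi>) = Imp (dec_f d \<phi>) (dec_f d \<psi>)"
| "dec_f d (CEx x \<phi>) = Ex x (dec_f d \<phi>)"
| "dec_f d (CAll x \<phi>) = All x (dec_f d \<phi>)"

lemma dec_t_surj:
  assumes de: "\<forall>s\<in>\<Sigma>. d (e s) = s"
  shows "syms_trm t \<subseteq> \<Sigma> \<Longrightarrow> \<exists>ct. dec_t d ct = t"
proof (induction t)
  case (Var x)
  have "dec_t d (CVar x) = Var x" by simp
  then show ?case by blast
next
  case (Cst n)
  have "dec_t d (CCst n) = Cst n" by simp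
  then show ?case by blast
next
  case (App k w ts)
  have "\<forall>x\<in>set ts. \<exists>y. x = dec_t d y" using App by auto
  then obtain cts where cts: "ts = map (dec_t d) cts" unfolding ex_map_conv[symmetric] by blast
  have "d (e (SFun k w)) = SFun k w" using de App.prems by auto
  then have "dec_t d (CApp (e (SFun k w)) cts) = App k w ts" using cts by simp
  then show ?case by blast
next
  case (Fap t)
  then obtain ct where "dec_t d ct = t" by auto
  then have "dec_t d (CFap ct) = Fap t" by simp
  then show ?case by blast
next
  case (GFap k G ts t)
  have "\<forall>x\<in>set ts. \<exists>y. x = dec_t d y" using GFap by auto
  then obtain cts where cts: "ts = map (dec_t d) cts" unfolding ex_map_conv[symmetric] by blast
  obtain ct where ct: "dec_t d ct = t" using GFap by auto
  have "d (e (SGF k G)) = SGF k G" using de GFap.prems by auto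
  then have "dec_t d (CGF (e (SGF k G)) cts ct) = GFap k G ts t" using cts ct by simp
  then show ?case by blast
qed

lemma dec_f_surj:
  assumes de: "\<forall>s\<in>\<Sigma>. d (e s) = s"
  shows "syms_fm \<phi> \<subseteq> \<Sigma> \<Longrightarrow> \<exists>c. dec_f d c = \<phi>"
proof (induction \<phi>)
  case (Eq s t)
  obtain cs ct where "dec_t d cs = s" "dec_t d ct = t" using dec_t_surj[OF de] Eq by (metis le_sup_iff syms_fm.simps(1))
  then have "dec_f d (CEq cs ct) = Eq s t" by simp
  then show ?case by blast
next
  case (Pred k p ts)
  have "\<forall>x\<in>set ts. \<exists>y. x = dec_t d y" using Pred dec_t_surj[OF de] by auto
  then obtain cts where cts: "ts = map (dec_t d) cts" unfolding ex_map_conv[symmetric] by blast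
  have "d (e (SPred k p)) = SPred k p" using de Pred.prems by auto
  then have "dec_f d (CPred (e (SPred k p)) cts) = Pred k p ts" using cts by simp
  then show ?case by blast
next
  case (Neg \<phi>)
  then obtain c where "dec_f d c = \<phi>" by auto
  then have "dec_f d (CNeg c) = Neg \<phi>" by simp
  then show ?case by blast
next
  case (Conj \<phi> \<psi>)
  then obtain c1 c2 where "dec_f d c1 = \<phi>" "dec_f d c2 = \<psi>" by auto
  then have "dec_f d (CConj c1 c2) = Conj \<phi> \<psi>" by simp
  then show ?case by blast
next
  case (Disj \<phi> \<psi>)
  then obtain c1 c2 where "dec_f d c1 = \<phi>" "dec_f d c2 = \<psi>" by auto
  then have "dec_f d (CDisj c1 c2) = Disj \<phi> \<psi>" by simp
  then show ?case by blast
next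
  case (Imp \<phi> \<psi>)
  then obtain c1 c2 where "dec_f d c1 = \<phi>" "dec_f d c2 = \<psi>" by auto
  then have "dec_f d (CImp c1 c2) = Imp \<phi> \<psi>" by simp
  then show ?case by blast
next
  case (Ex x \<phi>)
  then obtain c where "dec_f d c = \<phi>" by auto
  then have "dec_f d (CEx x c) = Ex x \<phi>" by simp
  then show ?case by blast
next
  case (All x \<phi>)
  then obtain c where "dec_f d c = \<phi>" by auto
  then have "dec_f d (CAll x c) = All x \<phi>" by simp
  then show ?case by blast
qed

lemma countable_fms: "countable \<Sigma> \<Longrightarrow> countable {\<phi>. syms_fm \<phi> \<subseteq> \<Sigma>}"
proof -
  assume cS: "countable \<Sigma>"
  have de: "\<forall>s\<in>\<Sigma>. from_nat_into \<Sigma> (to_nat_on \<Sigma> s) = s" using cS by simp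
  have "{\<phi>. syms_fm \<phi> \<subseteq> \<Sigma>} \<subseteq> range (dec_f (from_nat_into \<Sigma>))"
    using dec_f_surj[OF de] by blast
  moreover have "countable (range (dec_f (from_nat_into \<Sigma>)))" by (rule countable_image) simp
  ultimately show ?thesis by (rule countable_subset)
qed




lemma delta_set: "DeltaF m \<phi> \<Longrightarrow> {f. holds f e \<phi>} \<in> bDelta (Suc (m - 1))"
proof (cases m)
  case 0
  assume "DeltaF m \<phi>"
  then have "qfree \<phi>" using 0 by simp
  then have "{f. holds f e \<phi>} \<in> bDelta 1" by (intro ld_delta1) (use qfree_ld in blast)
  then show ?thesis using 0 by simp
next
  case (Suc k)
  assume "DeltaF m \<phi>"
  then obtain \<psi> \<theta> where p: "SigmaF (Suc k) \<psi>" "fm_equiv \<phi> \<psi>" and t: "PiF (Suc k) \<theta>" "fm_equiv \<phi> \<theta>"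
    using Suc by auto
  have "{f. holds f e \<phi>} = {f. holds f e \<psi>}" using p(2) unfolding fm_equiv_def by auto
  moreover have "{f. holds f e \<phi>} = {f. holds f e \<theta>}" using t(2) unfolding fm_equiv_def by auto
  moreover have "{f. holds f e \<psi>} \<in> bSigma (Suc k)" using fm_sets p(1) by blast
  moreover have "- {f. holds f e \<theta>} \<in> bSigma (Suc k)" using fm_sets t(1) by blast
  ultimately show ?thesis using Suc by (simp add: bDelta_iff)
qed

lemma guess_to_delta:
  assumes "guessable m S"
  shows "S \<in> bDelta (Suc (Suc (m - 1)))"
proof -
  obtain \<Sigma> :: "sym set" and phi :: "nat \<Rightarrow> fm" and G :: "nat list \<Rightarrow> nat" where all: "countable \<Sigma> \<and> range phi = {\<phi>. sentence \<phi> \<and> DeltaF m \<phi> \<and> syms_fm \<phi> \<subseteq> \<Sigma>}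
    \<and> (\<forall>f :: nat \<Rightarrow> nat. (\<lambda>n. G (map (\<lambda>i. fval f (phi i)) [0..<Suc n]))
             \<longlonglongrightarrow> (if f \<in> S then 1 else 0))"
    using assms unfolding guessable_def by (elim exE) (erule that)
  then have rng: "range phi = {\<phi>. sentence \<phi> \<and> DeltaF m \<phi> \<and> syms_fm \<phi> \<subseteq> \<Sigma>}"
    and lim: "\<forall>f :: nat \<Rightarrow> nat. (\<lambda>n. G (map (\<lambda>i. fval f (phi i)) [0..<Suc n]))
             \<longlonglongrightarrow> (if f \<in> S then 1 else 0)" by blast+
  have Pd: "{f. holds f (\<lambda>_. 0) (phi i)} \<in> bDelta (Suc (m - 1))" for i
  proof -
    have "phi i \<in> range phi" by simp
    then have "DeltaF m (phi i)" using rng by auto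
    then show ?thesis by (rule delta_set)
  qed
  define A where "A n = {f. G (map (\<lambda>i. fval f (phi i)) [0..<Suc n]) = 1}" for n
  have Ad: "A n \<in> bDelta (Suc (m - 1))" for n
  proof -
    define Q where "Q p = (G (map (\<lambda>i. if p i then 1 else 0) [0..<Suc n]) = 1)" for p :: "nat \<Rightarrow> bool"
    have "{f. Q (\<lambda>i. holds f (\<lambda>_. 0) (phi i))} \<in> bDelta (Suc (m - 1))"
    proof (rule delta_comb[where P = "\<lambda>i f. holds f (\<lambda>_. 0) (phi i)" and Q = Q and L = "Suc n"])
      show "\<forall>j<Suc n. {f. holds f (\<lambda>_. 0) (phi j)} \<in> bDelta (Suc (m - 1))" using Pd by blast
      show "\<forall>p p'. (\<forall>j<Suc n. p j = p' j) \<longrightarrow> Q p = Q p'"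
      proof (intro allI impI)
        fix p p' :: "nat \<Rightarrow> bool" assume H: "\<forall>j<Suc n. p j = p' j"
        have "map (\<lambda>i. if p i then 1 else 0) [0..<Suc n] = map (\<lambda>i. if p' i then 1 else (0::nat)) [0..<Suc n]"
          using H by (intro map_cong) auto
        then show "Q p = Q p'" unfolding Q_def by (simp only:)
      qed
    qed
    moreover have "{f. Q (\<lambda>i. holds f (\<lambda>_. 0) (phi i))} = A n"
      unfolding Q_def A_def fval_def by simp
    ultimately show ?thesis by simp
  qed
  have Aev: "\<forall>f. eventually (\<lambda>n. (f \<in> A n) = (f \<in> S)) sequentially"
  proof
    fix f :: "nat \<Rightarrow> nat"
    have "eventually (\<lambda>n. G (map (\<lambda>i. fval f (phi i)) [0..<Suc n]) = (if f \<in> S then 1 else 0)) sequentially"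
      by (rule tendsto_discrete[THEN iffD1, OF lim[rule_format]])
    then show "eventually (\<lambda>n. (f \<in> A n) = (f \<in> S)) sequentially"
      by (rule eventually_mono) (auto simp: A_def split: if_splits)
  qed
  show ?thesis by (rule limit_delta[OF _ Aev]) (use Ad in blast)
qed

lemma sentence_for:
  assumes "A \<in> bDelta (Suc k)"
    and "(m = 0 \<and> k = 0 \<and> (\<forall>f g. agr n g f \<longrightarrow> (g \<in> A \<longleftrightarrow> f \<in> A))) \<or> m = Suc k"
  shows "\<exists>\<phi>. sentence \<phi> \<and> DeltaF m \<phi> \<and> (\<forall>f. holds f (\<lambda>_. 0) \<phi> = (f \<in> A))"
  using assms(2)
proof
  assume h: "m = 0 \<and> k = 0 \<and> (\<forall>f g. agr n g f \<longrightarrow> (g \<in> A \<longleftrightarrow> f \<in> A))"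
  define H where "H xs s = (if (\<exists>g\<in>A. \<forall>j<length s. g j = s!j) then 1 else (0::nat))" for xs s :: "nat list"
  define \<phi> where "\<phi> = Eq (GFap 0 H [] (Cst n)) (Cst 1)"
  have "holds f e \<phi> = (f \<in> A)" for f e
  proof -
    have L: "length (map f [0..<Suc n]) = Suc n" by simp
    have N: "(map f [0..<Suc n]) ! j = f j" if "j < Suc n" for j
      using that by (subst nth_map_upt) auto
    have "holds f e \<phi> \<longleftrightarrow> (\<exists>g\<in>A. \<forall>j<Suc n. g j = f j)"
      unfolding \<phi>_def H_def using L N by (auto simp del: upt_Suc)
    also have "\<dots> \<longleftrightarrow> f \<in> A"
    proof
      assume "\<exists>g\<in>A. \<forall>j<Suc n. g j = f j"
      then obtain g where "g \<in> A" "\<forall>j<Suc n. g j = f j" by blast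
      then have "agr n g f" unfolding agr_def by auto
      then show "f \<in> A" using h \<open>g \<in> A\<close> by blast
    qed blast
    finally show ?thesis .
  qed
  moreover have "sentence \<phi>" unfolding sentence_def \<phi>_def by simp
  moreover have "DeltaF m \<phi>" using h unfolding \<phi>_def by simp
  ultimately show ?thesis by blast
next
  assume h: "m = Suc k"
  have s1: "\<forall>i::nat. (\<lambda>_. A) i \<in> bSigma (Suc k)" and s2: "\<forall>i::nat. (\<lambda>_. - A) i \<in> bSigma (Suc k)"
    using assms(1) by (auto simp: bDelta_iff)
  note c1 = constr[of k, THEN spec[where x = "\<lambda>_::nat. A"], THEN spec[where x = "Cst 0"]]
  note c2 = constr[of k, THEN spec[where x = "\<lambda>_::nat. - A"], THEN spec[where x = "Cst 0"]]
  from c1 s1 have "\<exists>\<phi> \<psi>. wf_fm \<phi> \<and> wf_fm \<psi> \<and> SigmaF (Suc k) \<phi> \<and> PiF (Suc k) \<psi> \<and>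
      fv_fm \<phi> \<subseteq> fv_trm (Cst 0) \<and> fv_fm \<psi> \<subseteq> fv_trm (Cst 0) \<and>
      (\<forall>f e. holds f e \<phi> = (f \<in> A)) \<and> (\<forall>f e. holds f e \<psi> = (f \<notin> A))" by simp
  then obtain \<phi> where p: "wf_fm \<phi>" "SigmaF (Suc k) \<phi>" "fv_fm \<phi> \<subseteq> fv_trm (Cst 0)"
      "\<forall>f e. holds f e \<phi> = (f \<in> A)" by blast
  from c2 s2 have "\<exists>\<phi> \<psi>. wf_fm \<phi> \<and> wf_fm \<psi> \<and> SigmaF (Suc k) \<phi> \<and> PiF (Suc k) \<psi> \<and>
      fv_fm \<phi> \<subseteq> fv_trm (Cst 0) \<and> fv_fm \<psi> \<subseteq> fv_trm (Cst 0) \<and>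
      (\<forall>f e. holds f e \<phi> = (f \<in> - A)) \<and> (\<forall>f e. holds f e \<psi> = (f \<notin> - A))" by simp
  then obtain \<psi> where q: "wf_fm \<psi>" "PiF (Suc k) \<psi>" "\<forall>f e. holds f e \<psi> = (f \<notin> - A)" by blast
  have "sentence \<phi>" using p unfolding sentence_def by auto
  moreover have "DeltaF m \<phi>"
  proof -
    have e0: "fm_equiv \<phi> \<phi>" unfolding fm_equiv_def by blast
    have e1: "fm_equiv \<phi> \<psi>" unfolding fm_equiv_def using p(4) q(3) by simp
    show ?thesis unfolding h DeltaF.simps using p(1,2) q(1,2) e0 e1 by blast
  qed
  ultimately show ?thesis using p(4) by blast
qed

lemma delta_to_guess:
  assumes "S \<in> bDelta (Suc (Suc k))"
    and mk: "(m = 0 \<and> k = 0) \<or> m = Suc k"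
  shows "guessable m S"
proof -
  obtain A where Ad: "\<forall>n. A n \<in> bDelta (Suc k)"
    and Adet: "k = 0 \<longrightarrow> (\<forall>n f g. agr n g f \<longrightarrow> (g \<in> A n \<longleftrightarrow> f \<in> A n))"
    and Aev: "\<forall>f. eventually (\<lambda>n. (f \<in> A n) = (f \<in> S)) sequentially"
    using approx[OF assms(1)] by blast
  have "\<forall>n. \<exists>\<phi>. sentence \<phi> \<and> DeltaF m \<phi> \<and> (\<forall>f. holds f (\<lambda>_. 0) \<phi> = (f \<in> A n))"
  proof
    fix n
    have "(m = 0 \<and> k = 0 \<and> (\<forall>f g. agr n g f \<longrightarrow> (g \<in> A n \<longleftrightarrow> f \<in> A n))) \<or> m = Suc k"
      using mk Adet by blast
    then show "\<exists>\<phi>. sentence \<phi> \<and> DeltaF m \<phi> \<and> (\<forall>f. holds f (\<lambda>_. 0) \<phi> = (f \<in> A n))"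
      by (rule sentence_for[OF Ad[rule_format]])
  qed
  from choice[OF this] obtain \<theta> where th: "\<forall>n. sentence (\<theta> n) \<and> DeltaF m (\<theta> n) \<and> (\<forall>f. holds f (\<lambda>_. 0) (\<theta> n) = (f \<in> A n))"
    by (elim exE) (rule that)
  define \<Sigma> where "\<Sigma> = (\<Union>n. syms_fm (\<theta> n))"
  have cS: "countable \<Sigma>" unfolding \<Sigma>_def
    by (rule countable_UN) (auto intro: countable_finite finite_syms_fm)
  define X where "X = {\<phi>. sentence \<phi> \<and> DeltaF m \<phi> \<and> syms_fm \<phi> \<subseteq> \<Sigma>}"
  have cX: "countable X" unfolding X_def by (rule countable_subset[OF _ countable_fms[OF cS]]) auto
  have thX: "\<theta> n \<in> X" for n using th unfolding X_def \<Sigma>_def by auto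
  then have Xne: "X \<noteq> {}" by blast
  define phi where "phi i = (if even i then \<theta> (i div 2) else from_nat_into X (i div 2))" for i
  have rng: "range phi = X"
  proof
    show "range phi \<subseteq> X" unfolding phi_def using thX from_nat_into[OF Xne] by auto
    show "X \<subseteq> range phi"
    proof
      fix x assume "x \<in> X"
      then have "phi (2 * to_nat_on X x + 1) = x" unfolding phi_def using cX \<open>x \<in> X\<close> by simp
      then show "x \<in> range phi" by (metis rangeI)
    qed
  qed
  define G where "G L = (if L = [] then 0 else L ! (2 * ((length L - 1) div 2)))" for L :: "nat list"
  have Geq: "G (map (\<lambda>i. fval f (phi i)) [0..<Suc n]) = fval f (\<theta> (n div 2))" for f n
  proof -
    have "2 * (n div 2) < Suc n" by simp
    then have "(map (\<lambda>i. fval f (phi i)) [0..<Suc n]) ! (2 * (n div 2)) = fval f (phi (2 * (n div 2)))"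
      by (subst nth_map_upt) auto
    then show ?thesis unfolding G_def phi_def by (simp del: upt_Suc)
  qed
  have conv: "(\<lambda>n. G (map (\<lambda>i. fval f (phi i)) [0..<Suc n])) \<longlonglongrightarrow> (if f \<in> S then 1 else 0)" for f
  proof -
    obtain N where N: "\<forall>n\<ge>N. (f \<in> A n) = (f \<in> S)"
      using Aev[rule_format, of f] unfolding eventually_sequentially by blast
    have "\<forall>n\<ge>2*N. G (map (\<lambda>i. fval f (phi i)) [0..<Suc n]) = (if f \<in> S then 1 else 0)"
    proof (intro allI impI)
      fix n assume "2 * N \<le> n"
      then have "N \<le> n div 2" by simp
      then have "(f \<in> A (n div 2)) = (f \<in> S)" using N by blast
      then show "G (map (\<lambda>i. fval f (phi i)) [0..<Suc n]) = (if f \<in> S then 1 else 0)"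
        by (subst Geq) (simp add: fval_def th)
    qed
    then have "eventually (\<lambda>n. G (map (\<lambda>i. fval f (phi i)) [0..<Suc n]) = (if f \<in> S then 1 else 0)) sequentially"
      unfolding eventually_sequentially by blast
    then show ?thesis by (rule tendsto_discrete[THEN iffD2])
  qed
  show ?thesis unfolding guessable_def
    apply (rule exI[of _ \<Sigma>], rule exI[of _ phi], rule exI[of _ G])
    using cS rng conv unfolding X_def by blast
qed

theorem mainTheorem1:
  fixes S :: "(nat \<Rightarrow> nat) set"
  shows "(guessable 0 S \<longleftrightarrow> S \<in> bDelta 2) \<and>
         (\<forall>m::nat. m > 0 \<longrightarrow> (guessable m S \<longleftrightarrow> S \<in> bDelta (m + 1)))"
proof
  have "guessable 0 S \<longleftrightarrow> S \<in> bDelta (Suc (Suc 0))"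
    using guess_to_delta[of 0 S] delta_to_guess[of S 0 0] by auto
  then show "guessable 0 S \<longleftrightarrow> S \<in> bDelta 2" by (simp add: numeral_2_eq_2)
next
  show "\<forall>m::nat. m > 0 \<longrightarrow> (guessable m S \<longleftrightarrow> S \<in> bDelta (m + 1))"
  proof (intro allI impI)
    fix m :: nat assume "m > 0"
    then obtain k where k: "m = Suc k" by (cases m) auto
    have "guessable m S \<longleftrightarrow> S \<in> bDelta (Suc (Suc k))"
      using guess_to_delta[of m S] delta_to_guess[of S k m] k by auto
    then show "guessable m S \<longleftrightarrow> S \<in> bDelta (m + 1)" using k by simp
  qed
qed



end
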